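(* Let $n\ge2$. For every $X\in U_Q$ and every $s>0$ such that the horoballs $\mathcal H_s$ and $X\mathcal H_s$ of $\mathbb H^n_{\mathbb C}$ have disjoint interiors, we have $$d'_{\mathbb H^n_{\mathbb C}}(\mathcal H_s,X\mathcal H_s)=\log|c|+\log\frac s2,$$ where $c$ is the bottom-left entry of $X$ in the block decomposition $\mathbb C\times\mathbb C^{n-1}\times\mathbb C$.
   Context: $\mathbb H^n_{\mathbb C}=\{(w_0,w)\in\mathbb C\times\mathbb C^{n-1}:2\mathrm{Re}\,w_0-|w|^2>0\}$ is the Siegel domain with metric $ds^2=\frac{4}{(2\mathrm{Re}\,w_0-|w|^2)^2}\big((dw_0-dw^*w)(\overline{dw_0}-w^*dw)+(2\mathrm{Re}\,w_0-|w|^2)dw^*dw\big)$, $d_{\mathbb H^n_{\mathbb C}}$ its Riemannian distance and $d'_{\mathbb H^n_{\mathbb C}}=\frac12 d_{\mathbb H^n_{\mathbb C}}$; $\mathcal H_s=\{2\mathrm{Re}\,w_0-|w|^2\ge s\}$. Let $q(z_0,z,z_n)=-z_0\bar z_n-z_n\bar z_0+|z|^2$ on $\mathbb C\times\mathbb C^{n-1}\times\mathbb C$, with matrix $Q=\begin{pmatrix}0&0&-1\\0&I&0\\-1&0&0\end{pmatrix}$, and $U_Q$ the group of invertible complex matrices preserving $q$. Via the embedding $(w_0,w)\mapsto[w_0:w:1]$ of $\mathbb H^n_{\mathbb C}$ onto the negative cone of $q$ in $\mathbb P_n(\mathbb C)$, $U_Q$ acts isometrically on $\mathbb H^n_{\mathbb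 C}$ by projective transformations. The distance between two sets is the infimum of distances between their points. *)

theory Defs
  imports "HOL-Analysis.Analysis"
begin

text \<open>Points of the Siegel domain: pairs (w0, w) with w0 complex and w in C^(n-1);
  the dimension n-1 is the cardinality of the finite index type 'm, so n = CARD('m)+1 \<ge> 2.\<close>

definition siegel_h :: "complex \<times> (complex^'m) \<Rightarrow> real" where
  "siegel_h p = 2 * Re (fst p) - (norm (snd p))^2"

definition siegel_domain :: "(complex \<times> (complex^'m::finite)) set" where
  "siegel_domain = {p. siegel_h p > 0}"

definition siegel_metric :: "complex \<times> (complex^'m::finite) \<Rightarrow> complex \<times> (complex^'m) \<Rightarrow> real" where
  "siegel_metric p v =
     4 / (siegel_h p)^2 *
       ((cmod (fst v - (\<Sum>i\<in>UNIV. cnj (snd p $ i) * snd v $ i)))^2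
        + siegel_h p * (norm (snd v))^2)"

definition curve_speed :: "(real \<Rightarrow> complex \<times> (complex^'m::finite)) \<Rightarrow> real \<Rightarrow> real" where
  "curve_speed \<gamma> t = sqrt (siegel_metric (\<gamma> t) (vector_derivative \<gamma> (at t)))"

definition curve_length :: "(real \<Rightarrow> complex \<times> (complex^'m::finite)) \<Rightarrow> real" where
  "curve_length \<gamma> = integral {0..1} (curve_speed \<gamma>)"

definition admissible_curve ::
  "complex \<times> (complex^'m::finite) \<Rightarrow> complex \<times> (complex^'m) \<Rightarrow> (real \<Rightarrow> complex \<times> (complex^'m)) \<Rightarrow> bool" where
  "admissible_curve p q \<gamma> \<longleftrightarrow>
     \<gamma> piecewise_C1_differentiable_on {0..1} \<and> \<gamma> ` {0..1} \<subseteq> siegel_domain \<and>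
     \<gamma> 0 = p \<and> \<gamma> 1 = q \<and> curve_speed \<gamma> integrable_on {0..1}"

definition siegel_dist :: "complex \<times> (complex^'m::finite) \<Rightarrow> complex \<times> (complex^'m) \<Rightarrow> real" where
  "siegel_dist p q = Inf {curve_length \<gamma> | \<gamma>. admissible_curve p q \<gamma>}"

definition siegel_dist' :: "complex \<times> (complex^'m::finite) \<Rightarrow> complex \<times> (complex^'m) \<Rightarrow> real" where
  "siegel_dist' p q = siegel_dist p q / 2"

definition siegel_setdist' :: "(complex \<times> (complex^'m::finite)) set \<Rightarrow> (complex \<times> (complex^'m)) set \<Rightarrow> real" where
  "siegel_setdist' A B = Inf {siegel_dist' p q | p q. p \<in> A \<and> q \<in> B}"

definition horoball :: "real \<Rightarrow> (complex \<times> (complex^'m::finite)) set" where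
  "horoball s = {p. siegel_h p \<ge> s}"

text \<open>Homogeneous coordinates C x C^(n-1) x C, indexed by the type ((unit + 'm) + unit):
  first coordinate z0 = Inl (Inl ()), middle coordinates Inl (Inr i), last coordinate zn = Inr ().\<close>

type_synonym 'm idx = "(unit + 'm) + unit"

abbreviation first_idx :: "'m idx" where "first_idx \<equiv> Inl (Inl ())"
abbreviation mid_idx :: "'m \<Rightarrow> 'm idx" where "mid_idx i \<equiv> Inl (Inr i)"
abbreviation last_idx :: "'m idx" where "last_idx \<equiv> Inr ()"

definition qform :: "complex^('m::finite idx) \<Rightarrow> complex" where
  "qform z = - z $ first_idx * cnj (z $ last_idx) - z $ last_idx * cnj (z $ first_idx)
             + (\<Sum>i\<in>UNIV. complex_of_real ((cmod (z $ mid_idx i))^2))"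

definition U_Q :: "(complex^('m::finite idx)^('m idx)) set" where
  "U_Q = {X. invertible X \<and> (\<forall>z. qform (X *v z) = qform z)}"

definition lift :: "complex \<times> (complex^'m::finite) \<Rightarrow> complex^('m idx)" where
  "lift p = (\<chi> k. case k of Inl (Inl _) \<Rightarrow> fst p | Inl (Inr i) \<Rightarrow> snd p $ i | Inr _ \<Rightarrow> 1)"

definition proj_act :: "complex^('m::finite idx)^('m idx) \<Rightarrow> complex \<times> (complex^'m) \<Rightarrow> complex \<times> (complex^'m)" where
  "proj_act X p = (let z = X *v lift p in
                    ((z $ first_idx) / (z $ last_idx), \<chi> i. (z $ mid_idx i) / (z $ last_idx)))"

end

theory Submission
  imports Defs
begin


definition sB :: "complex^('m::finite idx) \<Rightarrow> complex^('m idx) \<Rightarrow> complex" where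
 "sB u v = - u$first_idx * cnj(v$last_idx) - u$last_idx * cnj(v$first_idx)
     + (\<Sum>i\<in>UNIV. u$mid_idx i * cnj(v$mid_idx i))"

lemma qform_sB: "qform z = sB z z"
  unfolding qform_def sB_def complex_norm_square by (simp add: mult.commute)

lemma sB_add_left: "sB (u + v) w = sB u w + sB v w"
  unfolding sB_def by (simp add: algebra_simps sum.distrib)
lemma sB_add_right: "sB u (v + w) = sB u v + sB u w"
  unfolding sB_def by (simp add: algebra_simps sum.distrib)
lemma sB_diff_left: "sB (u - v) w = sB u w - sB v w"
  unfolding sB_def by (simp add: algebra_simps sum_subtractf)
lemma sB_diff_right: "sB u (v - w) = sB u v - sB u w"
  unfolding sB_def by (simp add: algebra_simps sum_subtractf)
lemma sB_scale_left: "sB (k *s u) v = k * sB u v"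
  unfolding sB_def by (simp add: algebra_simps sum_distrib_left)
lemma sB_scale_right: "sB u (k *s v) = cnj k * sB u v"
  unfolding sB_def by (simp add: algebra_simps sum_distrib_left)

lemma polar: "4 * sB u v = qform(u+v) - qform(u-v) + \<i> * qform(u + \<i> *s v) - \<i> * qform(u - \<i> *s v)"
  unfolding qform_sB sB_add_left sB_add_right sB_diff_left sB_diff_right sB_scale_left sB_scale_right
  by (simp add: algebra_simps)

lemma mv_scale: "(X::'a::comm_ring_1^'n^'k) *v (k *s v) = k *s (X *v v)"
  by (simp add: vec_eq_iff matrix_vector_mult_def sum_distrib_left algebra_simps)

lemma sB_inv:
  assumes "X \<in> U_Q" shows "sB (X *v u) (X *v v) = sB u v"
proof -
  have q: "\<And>z. qform (X *v z) = qform z" using assms unfolding U_Q_def by auto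
  have "4 * sB (X *v u) (X *v v) = 4 * sB u v"
    unfolding polar
    by (simp add: matrix_vector_right_distrib[symmetric] matrix_vector_mult_diff_distrib[symmetric] mv_scale[symmetric] q)
  then show ?thesis by simp
qed


definition e0 :: "complex^('m::finite idx)" where "e0 = (\<chi> k. if k = first_idx then 1 else 0)"

definition ell :: "complex^('m::finite idx)^('m idx) \<Rightarrow> complex \<times> (complex^'m) \<Rightarrow> complex" where
 "ell X m = fst m * cnj (X$last_idx$first_idx) + cnj (X$first_idx$first_idx)
     - (\<Sum>i\<in>UNIV. snd m $ i * cnj (X$mid_idx i$first_idx))"

lemma Xe0: "(X *v e0) $ k = X $ k $ first_idx"
  unfolding matrix_vector_mult_def e0_def by (simp add: if_distrib cong: if_cong)

lemma ell_sB: "ell X m = - sB (lift m) (X *v e0)"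
  unfolding ell_def sB_def Xe0 lift_def by (simp add: algebra_simps)

lemma norm_sq_vec: "(norm (x::complex^'m::finite))^2 = (\<Sum>i\<in>UNIV. (cmod (x$i))^2)"
  unfolding norm_vec_def L2_set_def by (simp add: sum_nonneg)

lemma qform_lift: "qform (lift p) = - complex_of_real (siegel_h p)"
proof -
  have "qform (lift p) = - fst p - cnj (fst p) + (\<Sum>i\<in>UNIV. complex_of_real ((cmod (snd p $ i))^2))"
    unfolding qform_def lift_def by simp
  also have "\<dots> = - complex_of_real (siegel_h p)"
    unfolding siegel_h_def norm_sq_vec by (simp add: complex_eq_iff)
  finally show ?thesis .
qed

lemma qform_last0: "z $ last_idx = 0 \<Longrightarrow> Re (qform z) \<ge> 0"
  unfolding qform_def by (simp add: sum_nonneg)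

lemma U_Q_q: "X \<in> U_Q \<Longrightarrow> qform (X *v z) = qform z"
  unfolding U_Q_def by auto

lemma last_ne0:
  assumes "\<forall>z. qform (M *v z) = qform z" "siegel_h p > 0"
  shows "(M *v lift p) $ last_idx \<noteq> 0"
proof
  assume "(M *v lift p) $ last_idx = 0"
  then have "Re (qform (M *v lift p)) \<ge> 0" by (rule qform_last0)
  with assms show False by (simp add: qform_lift)
qed

lemma lift_proj:
  assumes "(M *v lift p) $ last_idx \<noteq> 0"
  shows "lift (proj_act M p) = (1 / (M *v lift p) $ last_idx) *s (M *v lift p)"
  using assms unfolding lift_def proj_act_def Let_def
  by (auto simp: vec_eq_iff split: sum.splits)

lemma proj_scaled:
  assumes "M *v lift p = k *s lift m" "k \<noteq> 0"
  shows "proj_act M p = m"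
proof -
  have l: "(M *v lift p) $ last_idx = k" using assms(1) by (simp add: vec_eq_iff lift_def)
  show ?thesis using assms l unfolding proj_act_def Let_def
    by (auto simp: lift_def vec_eq_iff prod_eq_iff)
qed

lemma qform_scale: "qform (k *s z) = complex_of_real ((cmod k)^2) * qform z"
  unfolding qform_sB sB_scale_left sB_scale_right complex_norm_square by (simp add: algebra_simps)

lemma h_of_lift: "siegel_h p = - Re (qform (lift p))"
  by (simp add: qform_lift)

lemma lemA:
  assumes X: "X \<in> U_Q" and p: "siegel_h p > 0"
  shows "siegel_h (proj_act X p) = siegel_h p * (cmod (ell X (proj_act X p)))^2
     \<and> siegel_h (proj_act X p) > 0 \<and> ell X (proj_act X p) \<noteq> 0"
proof -
  define z where "z = X *v lift p"
  have q: "\<forall>z. qform (X *v z) = qform z" using X U_Q_q by blast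
  have zn: "z $ last_idx \<noteq> 0" unfolding z_def by (rule last_ne0[OF q p])
  have L: "lift (proj_act X p) = (1 / z $ last_idx) *s z" unfolding z_def
    by (rule lift_proj) (simp add: zn[unfolded z_def])
  have hq: "siegel_h (proj_act X p) = siegel_h p / (cmod (z $ last_idx))^2"
    unfolding h_of_lift[of "proj_act X p"] L qform_scale
    by (simp add: z_def q qform_lift norm_divide power_divide)
  have "sB z (X *v e0) = sB (lift p) e0" unfolding z_def by (rule sB_inv[OF X])
  also have "\<dots> = -1" by (simp add: sB_def lift_def e0_def)
  finally have sz: "sB z (X *v e0) = -1" .
  have el: "ell X (proj_act X p) = 1 / z $ last_idx"
    unfolding ell_sB L sB_scale_left sz by simp
  show ?thesis using zn p unfolding hq el by (simp add: norm_divide power_divide)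
qed

lemma lemB:
  assumes X: "X \<in> U_Q" and m: "siegel_h m > 0"
  shows "\<exists>p'. proj_act X p' = m \<and> siegel_h p' > 0 \<and> siegel_h m = siegel_h p' * (cmod (ell X m))^2"
proof -
  have inv: "invertible X" using X unfolding U_Q_def by auto
  obtain Y where XY: "X ** Y = mat 1" using inv unfolding invertible_def by blast
  have XYv: "\<And>z. X *v (Y *v z) = z" by (simp add: matrix_vector_mul_assoc XY)
  have q: "\<forall>z. qform (X *v z) = qform z" using X U_Q_q by blast
  have qY: "\<forall>z. qform (Y *v z) = qform z" using q XYv by metis
  define z where "z = Y *v lift m"
  have zn: "z $ last_idx \<noteq> 0" unfolding z_def by (rule last_ne0[OF qY m])
  define p' where "p' = proj_act Y m"
  have L: "lift p' = (1 / z $ last_idx) *s z" unfolding z_def p'_def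
    by (rule lift_proj) (simp add: zn[unfolded z_def])
  have hp: "siegel_h p' = siegel_h m / (cmod (z $ last_idx))^2"
    unfolding h_of_lift[of p'] L qform_scale
    by (simp add: z_def qY qform_lift norm_divide power_divide)
  have hp0: "siegel_h p' > 0" unfolding hp using m zn by simp
  have "X *v lift p' = (1 / z $ last_idx) *s lift m"
    unfolding L mv_scale z_def XYv ..
  then have pm: "proj_act X p' = m" by (rule proj_scaled) (simp add: zn)
  from lemA[OF X hp0] pm have "siegel_h m = siegel_h p' * (cmod (ell X m))^2" by simp
  with pm hp0 show ?thesis by blast
qed



lemma sq_cmod: "cmod c * cmod c = Re c * Re c + Im c * Im c"
  using cmod_power2[of c] by (simp add: power2_eq_square)

lemma cmod_diff_sq: "(cmod (a - b))^2 = (cmod a)^2 + (cmod b)^2 - 2 * Re (a * cnj b)"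
  unfolding cmod_power2 by (simp add: algebra_simps power2_eq_square)

lemma colq:
  fixes X :: "complex^('m::finite idx)^('m idx)"
  assumes X: "X \<in> U_Q"
  shows "2 * Re (X$first_idx$first_idx * cnj (X$last_idx$first_idx)) = (\<Sum>i\<in>UNIV. (cmod (X$mid_idx i$first_idx))^2)"
proof -
  have "qform (X *v e0) = qform (e0::complex^('m idx))" by (rule U_Q_q[OF X])
  also have "\<dots> = 0" by (simp add: qform_def e0_def)
  finally have "Re (qform (X *v e0)) = 0" by simp
  then show ?thesis unfolding qform_def Xe0 by (simp add: algebra_simps)
qed

lemma key_id:
  assumes X: "X \<in> U_Q"
  defines "c \<equiv> X$last_idx$first_idx"
  shows "2 * Re (c * ell X m) = siegel_h m * (cmod c)^2
           + (\<Sum>i\<in>UNIV. (cmod (c * snd m $ i - X$mid_idx i$first_idx))^2)"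
proof -
  have cq: "2 * Re (X$first_idx$first_idx * cnj c) = (\<Sum>i\<in>UNIV. (cmod (X$mid_idx i$first_idx))^2)"
    using colq[OF X] unfolding c_def .
  have r1: "Re (c * cnj (X$first_idx$first_idx)) = Re (X$first_idx$first_idx * cnj c)"
    by (simp add: algebra_simps)
  have "2 * Re (c * ell X m) = 2 * (cmod c)^2 * Re (fst m) + 2 * Re (X$first_idx$first_idx * cnj c)
        - 2 * (\<Sum>i\<in>UNIV. Re (c * snd m $ i * cnj (X$mid_idx i$first_idx)))"
    unfolding ell_def c_def[symmetric] using r1
    by (simp add: algebra_simps sum_distrib_left power2_eq_square sq_cmod)
  also have "\<dots> = siegel_h m * (cmod c)^2
           + (\<Sum>i\<in>UNIV. (cmod (c * snd m $ i - X$mid_idx i$first_idx))^2)"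
    unfolding cmod_diff_sq siegel_h_def norm_sq_vec cq
    by (simp add: sum.distrib sum_subtractf sum_distrib_left sum_distrib_right algebra_simps norm_mult power_mult_distrib)
  finally show ?thesis .
qed

lemma min_bound:
  assumes X: "X \<in> U_Q" and h: "siegel_h m \<ge> 0"
  shows "cmod (X$last_idx$first_idx) * siegel_h m \<le> 2 * cmod (ell X m)"
proof (cases "X$last_idx$first_idx = 0")
  case True then show ?thesis by simp
next
  case False
  define c where "c = X$last_idx$first_idx"
  have "siegel_h m * (cmod c)^2 \<le> 2 * Re (c * ell X m)"
    unfolding key_id[OF X, of m, folded c_def] by (simp add: sum_nonneg)
  also have "\<dots> \<le> 2 * cmod (c * ell X m)" using complex_Re_le_cmod[of "c * ell X m"] by linarith
  finally have "cmod c * (cmod c * siegel_h m) \<le> cmod c * (2 * cmod (ell X m))"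
    by (simp add: norm_mult power2_eq_square algebra_simps)
  then show ?thesis using False unfolding c_def by simp
qed



lemma cs2: assumes "A \<ge> 0" "a \<ge> 0" "B \<ge> 0" "b \<ge> 0"
  shows "A * a + B * b \<le> sqrt (A^2 + B^2) * sqrt (a^2 + b^2)"
proof -
  have "(A * a + B * b)^2 \<le> (A^2 + B^2) * (a^2 + b^2)"
    using sum_squares_ge_zero[of "A*b - B*a" 0] by (simp add: power2_eq_square algebra_simps)
  then have "A * a + B * b \<le> sqrt ((A^2 + B^2) * (a^2 + b^2))" by (rule real_le_rsqrt)
  then show ?thesis by (simp add: real_sqrt_mult)
qed

lemma cs_sum: "(\<Sum>i\<in>A. (f i::real) * g i) \<le> sqrt (\<Sum>i\<in>A. (f i)^2) * sqrt (\<Sum>i\<in>A. (g i)^2)"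
  if "\<And>i. f i \<ge> 0" "\<And>i. g i \<ge> 0"
  using L2_set_mult_ineq[where f=f and g=g and A=A] that unfolding L2_set_def by simp

lemma sqrt_metric:
  assumes "siegel_h p > 0"
  shows "sqrt (siegel_metric p V) = 2 / siegel_h p *
     sqrt ((cmod (fst V - (\<Sum>i\<in>UNIV. cnj (snd p $ i) * snd V $ i)))^2 + siegel_h p * (norm (snd V))^2)"
proof -
  have "siegel_metric p V = (2 / siegel_h p)^2 *
     ((cmod (fst V - (\<Sum>i\<in>UNIV. cnj (snd p $ i) * snd V $ i)))^2 + siegel_h p * (norm (snd V))^2)"
    unfolding siegel_metric_def by (simp add: power_divide)
  then show ?thesis using assms by (simp add: real_sqrt_mult)
qed

lemma pt_ineq:
  fixes X :: "complex^('m::finite idx)^('m idx)" and p V :: "complex \<times> (complex^'m)"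
  assumes X: "X \<in> U_Q" and hp: "siegel_h p > 0" and l0: "ell X p \<noteq> 0"
  defines "\<alpha> \<equiv> fst V - (\<Sum>i\<in>UNIV. cnj (snd p $ i) * snd V $ i)"
    and "Dl \<equiv> fst V * cnj (X$last_idx$first_idx) - (\<Sum>i\<in>UNIV. snd V $ i * cnj (X$mid_idx i$first_idx))"
  shows "\<bar>2 * Re \<alpha> / siegel_h p\<bar> \<le> sqrt (siegel_metric p V)"
    and "\<bar>2 * Re \<alpha> / siegel_h p - 2 * Re (cnj (ell X p) * Dl) / (cmod (ell X p))^2\<bar> \<le> sqrt (siegel_metric p V)"
proof -
  define h where "h = siegel_h p"
  define l where "l = ell X p"
  define c where "c = X$last_idx$first_idx"
  define M where "M = (norm (snd V))^2"
  define Q where "Q = (cmod \<alpha>)^2 + h * M"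
  have h0: "h > 0" using hp h_def by simp
  have M0: "M \<ge> 0" unfolding M_def by simp
  have sp: "sqrt (siegel_metric p V) = 2 / h * sqrt Q"
    unfolding Q_def h_def M_def \<alpha>_def using sqrt_metric[OF hp] .
  have aQ: "cmod \<alpha> \<le> sqrt Q" unfolding Q_def by (rule real_le_rsqrt) (use h0 M0 in simp)
  show "\<bar>2 * Re \<alpha> / siegel_h p\<bar> \<le> sqrt (siegel_metric p V)"
  proof -
    have "\<bar>2 * Re \<alpha> / h\<bar> = 2 / h * \<bar>Re \<alpha>\<bar>" using h0 by (simp add: abs_div)
    also have "\<dots> \<le> 2 / h * sqrt Q"
      using abs_Re_le_cmod[of \<alpha>] aQ h0 by (intro mult_left_mono) auto
    finally show ?thesis unfolding sp h_def .
  qed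
  define g where "g i = cnj (c * snd p $ i - X$mid_idx i$first_idx)" for i
  define G where "G = (\<Sum>i\<in>UNIV. (cmod (g i))^2)"
  have G0: "G \<ge> 0" unfolding G_def by (simp add: sum_nonneg)
  have dl: "Dl = cnj c * \<alpha> + (\<Sum>i\<in>UNIV. g i * snd V $ i)"
    unfolding Dl_def \<alpha>_def g_def c_def
    by (simp add: algebra_simps sum_distrib_left sum_subtractf)
  define E where "E = \<alpha> - h * Dl / l"
  have lE: "l * E = (l - h * cnj c) * \<alpha> - h * (\<Sum>i\<in>UNIV. g i * snd V $ i)"
    unfolding E_def dl using l0 l_def by (simp add: field_simps)
  have "cmod (l * E) \<le> cmod ((l - h * cnj c) * \<alpha>) + cmod (h * (\<Sum>i\<in>UNIV. g i * snd V $ i))"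
    unfolding lE by (rule norm_triangle_ineq4)
  also have "\<dots> \<le> cmod (l - h * cnj c) * cmod \<alpha> + h * (\<Sum>i\<in>UNIV. cmod (g i) * cmod (snd V $ i))"
  proof -
    have "cmod (\<Sum>i\<in>UNIV. g i * snd V $ i) \<le> (\<Sum>i\<in>UNIV. cmod (g i * snd V $ i))" by (rule norm_sum)
    then show ?thesis using h0 by (simp add: norm_mult mult_left_mono)
  qed
  also have "\<dots> \<le> cmod (l - h * cnj c) * cmod \<alpha> + h * (sqrt G * sqrt M)"
  proof -
    have "(\<Sum>i\<in>UNIV. cmod (g i) * cmod (snd V $ i)) \<le> sqrt G * sqrt M"
      unfolding G_def M_def norm_sq_vec by (rule cs_sum) auto
    then show ?thesis using h0 by (simp add: mult_left_mono)
  qed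
  also have "\<dots> = cmod (l - h * cnj c) * cmod \<alpha> + sqrt (h * G) * sqrt (h * M)"
    using h0 by (simp add: real_sqrt_mult)
  also have "\<dots> \<le> sqrt ((cmod (l - h * cnj c))^2 + (sqrt (h * G))^2) * sqrt ((cmod \<alpha>)^2 + (sqrt (h * M))^2)"
    by (rule cs2) (use h0 G0 M0 in auto)
  also have "\<dots> = cmod l * sqrt Q"
  proof -
    have k: "2 * Re (c * l) = h * (cmod c)^2 + G"
    proof -
      have "G = (\<Sum>i\<in>UNIV. (cmod (c * snd p $ i - X$mid_idx i$first_idx))^2)"
        by (simp only: G_def g_def complex_mod_cnj)
      then show ?thesis unfolding l_def h_def c_def using key_id[OF X, of p] by simp
    qed
    have e1: "(cmod (l - h * cnj c))^2 = (cmod l)^2 + h^2 * (cmod c)^2 - 2 * h * Re (c * l)"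
      unfolding cmod_diff_sq by (simp add: norm_mult power_mult_distrib algebra_simps)
    have e2: "h * G = 2 * h * Re (c * l) - h^2 * (cmod c)^2"
      using arg_cong[OF k, of "\<lambda>x. h * x"] by (simp add: power2_eq_square algebra_simps)
    have "(sqrt (h * G))^2 = h * G" using h0 G0 by simp
    then have "(cmod (l - h * cnj c))^2 + (sqrt (h * G))^2 = (cmod l)^2"
      using e1 e2 by linarith
    moreover have "(sqrt (h * M))^2 = h * M" using h0 M0 by simp
    ultimately show ?thesis unfolding Q_def by simp
  qed
  finally have "cmod l * cmod E \<le> cmod l * sqrt Q" by (simp add: norm_mult)
  then have EQ: "cmod E \<le> sqrt Q" using l0 l_def by simp
  have ReE: "2 * Re \<alpha> / h - 2 * Re (cnj l * Dl) / (cmod l)^2 = 2 / h * Re E"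
  proof -
    have r1: "Re (Dl / l) = Re (cnj l * Dl) / (cmod l)^2"
      unfolding Re_divide' by (simp add: algebra_simps)
    have r2: "Re E = Re \<alpha> - h * Re (Dl / l)" unfolding E_def
      by (simp add: times_divide_eq_right[symmetric] del: times_divide_eq_right)
    show ?thesis unfolding r2 r1 using h0 by (simp add: field_simps)
  qed
  have "\<bar>2 / h * Re E\<bar> \<le> 2 / h * sqrt Q"
  proof -
    have "\<bar>Re E\<bar> \<le> sqrt Q" using abs_Re_le_cmod[of E] EQ by linarith
    then have "2 * \<bar>Re E\<bar> / h \<le> 2 * sqrt Q / h" using h0 by (simp add: divide_right_mono)
    then show ?thesis using h0 by (simp add: abs_mult)
  qed
  then show "\<bar>2 * Re \<alpha> / siegel_h p - 2 * Re (cnj (ell X p) * Dl) / (cmod (ell X p))^2\<bar> \<le> sqrt (siegel_metric p V)"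
    unfolding sp h_def[symmetric] l_def[symmetric] ReE .
qed



lemma h_Re: "siegel_h p = Re (2 * fst p - (\<Sum>i\<in>UNIV. snd p $ i * cnj (snd p $ i)))"
  unfolding siegel_h_def norm_sq_vec by (simp add: Re_sum sq_cmod power2_eq_square)

lemma vd_fst: "(\<gamma> has_vector_derivative V) F \<Longrightarrow> ((\<lambda>t. fst (\<gamma> t)) has_vector_derivative fst V) F"
  by (rule bounded_linear.has_vector_derivative[OF bounded_linear_fst])
lemma vd_nth: "(\<gamma> has_vector_derivative V) F \<Longrightarrow> ((\<lambda>t. snd (\<gamma> t) $ i) has_vector_derivative (snd V $ i)) F"
  using bounded_linear.has_vector_derivative[OF bounded_linear_vec_nth,
     OF bounded_linear.has_vector_derivative[OF bounded_linear_snd]] .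

lemma deriv_h:
  fixes \<gamma> :: "real \<Rightarrow> complex \<times> (complex^'m::finite)"
  assumes "(\<gamma> has_vector_derivative V) (at t)"
  shows "((\<lambda>t. siegel_h (\<gamma> t)) has_real_derivative
     2 * Re (fst V - (\<Sum>i\<in>UNIV. cnj (snd (\<gamma> t) $ i) * snd V $ i))) (at t)"
proof -
  have "((\<lambda>t. 2 * fst (\<gamma> t) - (\<Sum>i\<in>UNIV. snd (\<gamma> t) $ i * cnj (snd (\<gamma> t) $ i))) has_vector_derivative
     (2 * fst V - (\<Sum>i\<in>UNIV. snd (\<gamma> t) $ i * cnj (snd V $ i) + snd V $ i * cnj (snd (\<gamma> t) $ i)))) (at t)"
    by (intro has_vector_derivative_diff has_vector_derivative_sum has_vector_derivative_mult
         has_vector_derivative_cnj vd_nth vd_fst assms has_vector_derivative_mult_right)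
  from bounded_linear.has_vector_derivative[OF bounded_linear_Re this]
  have "((\<lambda>t. siegel_h (\<gamma> t)) has_vector_derivative
     Re (2 * fst V - (\<Sum>i\<in>UNIV. snd (\<gamma> t) $ i * cnj (snd V $ i) + snd V $ i * cnj (snd (\<gamma> t) $ i)))) (at t)"
    unfolding h_Re .
  moreover have "Re (2 * fst V - (\<Sum>i\<in>UNIV. snd (\<gamma> t) $ i * cnj (snd V $ i) + snd V $ i * cnj (snd (\<gamma> t) $ i)))
     = 2 * Re (fst V - (\<Sum>i\<in>UNIV. cnj (snd (\<gamma> t) $ i) * snd V $ i))"
    by (simp add: Re_sum sum_distrib_left algebra_simps)
  ultimately show ?thesis by (simp add: has_real_derivative_iff_has_vector_derivative)
qed

lemma deriv_ell:
  fixes \<gamma> :: "real \<Rightarrow> complex \<times> (complex^'m::finite)"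
  assumes "(\<gamma> has_vector_derivative V) (at t)"
  shows "((\<lambda>t. ell X (\<gamma> t)) has_vector_derivative
     (fst V * cnj (X$last_idx$first_idx) - (\<Sum>i\<in>UNIV. snd V $ i * cnj (X$mid_idx i$first_idx)))) (at t)"
  unfolding ell_def
  by (rule derivative_eq_intros vd_nth vd_fst assms has_vector_derivative_sum has_vector_derivative_mult_left
        | simp)+

lemma deriv_N:
  fixes \<gamma> :: "real \<Rightarrow> complex \<times> (complex^'m::finite)"
  assumes "(\<gamma> has_vector_derivative V) (at t)"
  shows "((\<lambda>t. (cmod (ell X (\<gamma> t)))^2) has_real_derivative
     2 * Re (cnj (ell X (\<gamma> t)) * (fst V * cnj (X$last_idx$first_idx) - (\<Sum>i\<in>UNIV. snd V $ i * cnj (X$mid_idx i$first_idx))))) (at t)"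
proof -
  define Dl where "Dl = fst V * cnj (X$last_idx$first_idx) - (\<Sum>i\<in>UNIV. snd V $ i * cnj (X$mid_idx i$first_idx))"
  have d: "((\<lambda>t. ell X (\<gamma> t)) has_vector_derivative Dl) (at t)" unfolding Dl_def by (rule deriv_ell[OF assms])
  have "((\<lambda>t. ell X (\<gamma> t) * cnj (ell X (\<gamma> t))) has_vector_derivative
      (ell X (\<gamma> t) * cnj Dl + Dl * cnj (ell X (\<gamma> t)))) (at t)"
    by (intro has_vector_derivative_mult has_vector_derivative_cnj d)
  from bounded_linear.has_vector_derivative[OF bounded_linear_Re this]
  have "((\<lambda>t. (cmod (ell X (\<gamma> t)))^2) has_vector_derivative
      Re (ell X (\<gamma> t) * cnj Dl + Dl * cnj (ell X (\<gamma> t)))) (at t)"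
    by (simp add: sq_cmod power2_eq_square)
  moreover have "Re (ell X (\<gamma> t) * cnj Dl + Dl * cnj (ell X (\<gamma> t))) = 2 * Re (cnj (ell X (\<gamma> t)) * Dl)"
    by (simp add: algebra_simps)
  ultimately show ?thesis unfolding Dl_def[symmetric] by (simp add: has_real_derivative_iff_has_vector_derivative mult.commute)
qed

lemma metric_nonneg: "siegel_h p > 0 \<Longrightarrow> siegel_metric p V \<ge> 0"
  unfolding siegel_metric_def by simp

lemma adm_props:
  assumes "admissible_curve p q \<gamma>"
  shows "continuous_on {0..1} \<gamma>" and "\<exists>S. finite S \<and> (\<forall>t\<in>{0..1} - S. (\<gamma> has_vector_derivative vector_derivative \<gamma> (at t)) (at t))"
proof -
  have pc: "\<gamma> piecewise_C1_differentiable_on {0..1}" using assms unfolding admissible_curve_def by auto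
  then show "continuous_on {0..1} \<gamma>" unfolding piecewise_C1_differentiable_on_def by auto
  from pc obtain S D where "finite S" "\<forall>x\<in>{0..1} - S. (\<gamma> has_vector_derivative D x) (at x)"
    unfolding piecewise_C1_differentiable_on_def C1_differentiable_on_def by blast
  then show "\<exists>S. finite S \<and> (\<forall>t\<in>{0..1} - S. (\<gamma> has_vector_derivative vector_derivative \<gamma> (at t)) (at t))"
    using vector_derivative_at by metis
qed

lemma len_bound:
  assumes adm: "admissible_curve p q \<gamma>" and uv: "0 \<le> u" "u \<le> v" "v \<le> 1"
    and Gc: "continuous_on {0..1} G"
    and Gd: "\<And>t V. t \<in> {0<..<1} \<Longrightarrow> (\<gamma> has_vector_derivative V) (at t) \<Longrightarrow>
             \<exists>D. (G has_real_derivative D) (at t) \<and> \<bar>D\<bar> \<le> sqrt (siegel_metric (\<gamma> t) V)"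
  shows "\<bar>G v - G u\<bar> \<le> integral {u..v} (curve_speed \<gamma>)"
proof -
  obtain S where S: "finite S" "\<forall>t\<in>{0..1} - S. (\<gamma> has_vector_derivative vector_derivative \<gamma> (at t)) (at t)"
    using adm_props(2)[OF adm] by blast
  define G' where "G' t = (SOME D. (G has_real_derivative D) (at t) \<and> \<bar>D\<bar> \<le> curve_speed \<gamma> t)" for t
  have G'p: "(G has_real_derivative G' t) (at t) \<and> \<bar>G' t\<bar> \<le> curve_speed \<gamma> t" if "t \<in> {u<..<v} - S" for t
  proof -
    have t1: "t \<in> {0<..<1}" using that uv by auto
    have "(\<gamma> has_vector_derivative vector_derivative \<gamma> (at t)) (at t)" using S(2) that uv by auto
    from Gd[OF t1 this] have "\<exists>D. (G has_real_derivative D) (at t) \<and> \<bar>D\<bar> \<le> curve_speed \<gamma> t"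
      unfolding curve_speed_def .
    then show ?thesis unfolding G'_def by (rule someI_ex)
  qed
  have ftc: "(G' has_integral (G v - G u)) {u..v}"
  proof (rule fundamental_theorem_of_calculus_interior_strong[OF S(1) uv(2)])
    show "(G has_vector_derivative G' x) (at x)" if "x \<in> {u<..<v} - S" for x
      using G'p[OF that] by (simp add: has_real_derivative_iff_has_vector_derivative)
    show "continuous_on {u..v} G" using Gc by (rule continuous_on_subset) (use uv in auto)
  qed
  define G'' where "G'' t = (if t \<in> {u<..<v} - S then G' t else 0)" for t
  have ftc2: "(G'' has_integral (G v - G u)) {u..v}"
    by (rule has_integral_spike_finite[of "S \<union> {u, v}" _ _ G'])
       (use S(1) ftc in \<open>auto simp: G''_def\<close>)
  have spint: "curve_speed \<gamma> integrable_on {u..v}"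
    using adm uv unfolding admissible_curve_def by (auto intro: integrable_subinterval_real)
  have sp0: "curve_speed \<gamma> t \<ge> 0" if "t \<in> {u..v}" for t
  proof -
    have "\<gamma> t \<in> siegel_domain" using adm that uv unfolding admissible_curve_def by auto
    then show ?thesis unfolding curve_speed_def siegel_domain_def
      using metric_nonneg[of "\<gamma> t" "vector_derivative \<gamma> (at t)"] by auto
  qed
  have "norm (integral {u..v} G'') \<le> integral {u..v} (curve_speed \<gamma>)"
  proof (rule integral_norm_bound_integral)
    show "G'' integrable_on {u..v}" using ftc2 by blast
    show "curve_speed \<gamma> integrable_on {u..v}" by (rule spint)
    show "norm (G'' x) \<le> curve_speed \<gamma> x" if "x \<in> {u..v}" for x
      using G'p sp0[OF that] unfolding G''_def by auto
  qed
  then show ?thesis using ftc2 by (simp add: integral_unique)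
qed



lemma cont_h: "continuous_on UNIV (siegel_h :: complex \<times> (complex^'m::finite) \<Rightarrow> real)"
  unfolding siegel_h_def[abs_def] by (intro continuous_intros)

lemma cont_ell: "continuous_on UNIV (ell X)"
  unfolding ell_def[abs_def] by (intro continuous_intros continuous_on_compose2[OF bounded_linear.continuous_on[OF bounded_linear_vec_nth continuous_on_id]]) auto

lemma ell_ne0:
  assumes X: "X \<in> U_Q" and c: "X$last_idx$first_idx \<noteq> 0" and h: "siegel_h m > 0"
  shows "ell X m \<noteq> 0"
proof
  assume "ell X m = 0"
  with min_bound[OF X, of m] h have "cmod (X$last_idx$first_idx) * siegel_h m \<le> 0" by simp
  with c h show False by (simp add: mult_le_0_iff)
qed

lemma lower_curve:
  fixes X :: "complex^('m::finite idx)^('m idx)"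
  assumes X: "X \<in> U_Q" and s: "s > 0"
    and cs: "cmod (X$last_idx$first_idx) * s > 2"
    and adm: "admissible_curve p q \<gamma>"
    and hp: "siegel_h p \<ge> s" and hq: "siegel_h q \<ge> s * (cmod (ell X q))^2"
  shows "curve_length \<gamma> \<ge> 2 * (ln (cmod (X$last_idx$first_idx)) + ln (s / 2))"
proof -
  define c where "c = X$last_idx$first_idx"
  have c0: "c \<noteq> 0" using cs c_def by auto
  have cpos: "cmod c > 0" using c0 by simp
  have dom: "siegel_h (\<gamma> u) > 0" if "u \<in> {0..1}" for u
    using adm that unfolding admissible_curve_def siegel_domain_def by (auto simp: image_subset_iff)
  have g0: "\<gamma> 0 = p" and g1: "\<gamma> 1 = q" using adm unfolding admissible_curve_def by auto
  have gc: "continuous_on {0..1} \<gamma>" by (rule adm_props(1)[OF adm])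
  define Hf where "Hf u = siegel_h (\<gamma> u)" for u
  define Nf where "Nf u = (cmod (ell X (\<gamma> u)))^2" for u
  have Hc: "continuous_on {0..1} Hf" unfolding Hf_def
    by (rule continuous_on_compose2[OF cont_h gc]) auto
  have Nc: "continuous_on {0..1} Nf" unfolding Nf_def
    by (intro continuous_intros continuous_on_compose2[OF cont_ell gc]) auto
  have Npos: "Nf u > 0" if "u \<in> {0..1}" for u
    using ell_ne0[OF X _ dom[OF that]] c0 c_def unfolding Nf_def by auto
  have N0: "Nf 0 > 1"
  proof -
    have "cmod c * s \<le> cmod c * siegel_h p" using hp cpos by simp
    also have "\<dots> \<le> 2 * cmod (ell X p)" unfolding c_def by (rule min_bound[OF X]) (use hp s in simp)
    finally have "cmod (ell X p) > 1" using cs c_def by simp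
    then show ?thesis unfolding Nf_def g0 by simp
  qed
  have N1: "Nf 1 < 1"
  proof -
    define r where "r = cmod (ell X q)"
    have hq0: "siegel_h q > 0" using dom[of 1] g1 by simp
    have r0: "r > 0" using Npos[of 1] g1 unfolding Nf_def r_def by simp
    have "cmod c * (s * r^2) \<le> cmod c * siegel_h q" using hq cpos unfolding r_def by simp
    also have "\<dots> \<le> 2 * r" unfolding c_def r_def by (rule min_bound[OF X]) (use hq0 in simp)
    finally have "(cmod c * s) * r \<le> 2" using r0 by (simp add: power2_eq_square algebra_simps)
    moreover have "cmod c * s > 2" using cs c_def by simp
    ultimately have "r < 1"
    proof -
      assume a: "(cmod c * s) * r \<le> 2" "cmod c * s > 2"
      show "r < 1"
      proof (rule ccontr)
        assume "\<not> r < 1"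
        then have "(cmod c * s) * 1 \<le> (cmod c * s) * r" using a(2) by (intro mult_left_mono) auto
        with a show False by simp
      qed
    qed
    then show ?thesis unfolding Nf_def g1 r_def[symmetric] using r0
      by (simp add: power_less_one_iff)
  qed
  obtain u where u: "0 \<le> u" "u \<le> 1" "- Nf u = - 1"
    using IVT'[of "\<lambda>u. - Nf u" 0 "-1" 1] N0 N1 continuous_on_minus[OF Nc] by force
  define m where "m = \<gamma> u"
  have hm: "siegel_h m > 0" unfolding m_def using dom u by auto
  have lm2: "(cmod (ell X m))^2 = 1" using u unfolding Nf_def m_def by simp
  have lm: "cmod (ell X m) = 1"
    using lm2 power2_eq_1_iff[of "cmod (ell X m)"] norm_ge_zero[of "ell X m"] by linarith
  have hm2: "siegel_h m \<le> 2 / cmod c"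
    using min_bound[OF X, of m] hm lm cpos unfolding c_def by (simp add: field_simps)
  have I1: "\<bar>ln (Hf u) - ln (Hf 0)\<bar> \<le> integral {0..u} (curve_speed \<gamma>)"
  proof (rule len_bound[OF adm order_refl u(1) u(2)])
    show "continuous_on {0..1} (\<lambda>t. ln (Hf t))"
      using Hc dom unfolding Hf_def by (intro continuous_intros) (auto, fastforce)
    fix t V assume t: "t \<in> {0<..<1}" and V: "(\<gamma> has_vector_derivative V) (at t)"
    have ht: "siegel_h (\<gamma> t) > 0" using dom t by auto
    have "((\<lambda>t. ln (Hf t)) has_real_derivative
        1 / siegel_h (\<gamma> t) * (2 * Re (fst V - (\<Sum>i\<in>UNIV. cnj (snd (\<gamma> t) $ i) * snd V $ i)))) (at t)"
      unfolding Hf_def by (rule DERIV_chain2[OF DERIV_ln_divide[OF ht] deriv_h[OF V]])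
    moreover have "\<bar>1 / siegel_h (\<gamma> t) * (2 * Re (fst V - (\<Sum>i\<in>UNIV. cnj (snd (\<gamma> t) $ i) * snd V $ i)))\<bar>
        \<le> sqrt (siegel_metric (\<gamma> t) V)"
      using pt_ineq(1)[OF X ht ell_ne0[OF X _ ht], of V] c0 c_def by simp
    ultimately show "\<exists>D. ((\<lambda>t. ln (Hf t)) has_real_derivative D) (at t) \<and> \<bar>D\<bar> \<le> sqrt (siegel_metric (\<gamma> t) V)"
      by blast
  qed
  have I2: "\<bar>(ln (Hf 1) - ln (Nf 1)) - (ln (Hf u) - ln (Nf u))\<bar> \<le> integral {u..1} (curve_speed \<gamma>)"
  proof (rule len_bound[OF adm u(1) u(2) order_refl])
    show "continuous_on {0..1} (\<lambda>t. ln (Hf t) - ln (Nf t))"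
      using Hc Nc dom Npos unfolding Hf_def by (intro continuous_intros) (auto, fastforce+)
    fix t V assume t: "t \<in> {0<..<1}" and V: "(\<gamma> has_vector_derivative V) (at t)"
    have ht: "siegel_h (\<gamma> t) > 0" using dom t by auto
    have lt: "ell X (\<gamma> t) \<noteq> 0" using ell_ne0[OF X _ ht] c0 c_def by simp
    have Nt: "Nf t > 0" using Npos t by auto
    have "((\<lambda>t. ln (Hf t) - ln (Nf t)) has_real_derivative
        1 / siegel_h (\<gamma> t) * (2 * Re (fst V - (\<Sum>i\<in>UNIV. cnj (snd (\<gamma> t) $ i) * snd V $ i)))
        - 1 / Nf t * (2 * Re (cnj (ell X (\<gamma> t)) * (fst V * cnj (X$last_idx$first_idx) - (\<Sum>i\<in>UNIV. snd V $ i * cnj (X$mid_idx i$first_idx)))))) (at t)"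
    proof -
      have Nt': "(cmod (ell X (\<gamma> t)))^2 > 0" using Nt unfolding Nf_def .
      show ?thesis unfolding Hf_def Nf_def
        by (intro DERIV_diff DERIV_chain2[OF DERIV_ln_divide[OF ht] deriv_h[OF V]]
                DERIV_chain2[OF DERIV_ln_divide[OF Nt'] deriv_N[OF V]])
    qed
    moreover have "\<bar>1 / siegel_h (\<gamma> t) * (2 * Re (fst V - (\<Sum>i\<in>UNIV. cnj (snd (\<gamma> t) $ i) * snd V $ i)))
        - 1 / Nf t * (2 * Re (cnj (ell X (\<gamma> t)) * (fst V * cnj (X$last_idx$first_idx) - (\<Sum>i\<in>UNIV. snd V $ i * cnj (X$mid_idx i$first_idx)))))\<bar>
        \<le> sqrt (siegel_metric (\<gamma> t) V)"
      using pt_ineq(2)[OF X ht lt, of V] unfolding Nf_def by simp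
    ultimately show "\<exists>D. ((\<lambda>t. ln (Hf t) - ln (Nf t)) has_real_derivative D) (at t) \<and> \<bar>D\<bar> \<le> sqrt (siegel_metric (\<gamma> t) V)"
      by blast
  qed
  have Nu: "Nf u = 1" using u by simp
  have e1: "ln (Hf 0) \<ge> ln s" using hp s unfolding Hf_def g0 by simp
  have e2: "ln (Hf u) \<le> ln (2 / cmod c)" using hm2 hm cpos unfolding Hf_def m_def by simp
  have e3: "ln (Hf 1) - ln (Nf 1) \<ge> ln s"
  proof -
    have "s \<le> Hf 1 / Nf 1" using hq Npos[of 1] unfolding Hf_def Nf_def g1 by (simp add: field_simps)
    then have "ln s \<le> ln (Hf 1 / Nf 1)" using s by simp
    also have "\<dots> = ln (Hf 1) - ln (Nf 1)" using dom[of 1] Npos[of 1] unfolding Hf_def by (simp add: ln_div)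
    finally show ?thesis .
  qed
  have tot: "curve_length \<gamma> = integral {0..u} (curve_speed \<gamma>) + integral {u..1} (curve_speed \<gamma>)"
    unfolding curve_length_def
    using Henstock_Kurzweil_Integration.integral_combine[where a=0 and c=u and b=1 and f="curve_speed \<gamma>"] u adm by (auto simp: admissible_curve_def)
  have "2 * (ln (cmod c) + ln (s / 2)) = 2 * (ln s - ln (2 / cmod c))"
    using cpos s by (simp add: ln_div)
  also have "\<dots> \<le> curve_length \<gamma>" using I1 I2 e1 e2 e3 Nu tot by simp
  finally show ?thesis unfolding c_def .
qed



lemma length_nonneg:
  assumes adm: "admissible_curve p q \<gamma>" shows "curve_length \<gamma> \<ge> 0"
  unfolding curve_length_def
proof (rule integral_nonneg)
  show "curve_speed \<gamma> integrable_on {0..1}" using adm unfolding admissible_curve_def by auto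
  fix t :: real assume t: "t \<in> {0..1}"
  have "\<gamma> t \<in> siegel_domain" using adm t unfolding admissible_curve_def by auto
  then show "0 \<le> curve_speed \<gamma> t" unfolding curve_speed_def siegel_domain_def
    using metric_nonneg[of "\<gamma> t" "vector_derivative \<gamma> (at t)"] by auto
qed

lemma sq_convex: "0 \<le> u \<Longrightarrow> u \<le> 1 \<Longrightarrow> ((1 - u) * x + u * y)^2 \<le> (1 - u) * x^2 + u * (y::real)^2"
proof -
  assume "0 \<le> u" "u \<le> 1"
  then have "0 \<le> u * (1 - u) * (x - y)^2" by simp
  then show ?thesis by (simp add: power2_eq_square algebra_simps)
qed

lemma h_concave:
  fixes p q :: "complex \<times> (complex^'m::finite)"
  assumes "0 \<le> u" "u \<le> 1"
  shows "siegel_h (p + u *\<^sub>R (q - p)) \<ge> (1 - u) * siegel_h p + u * siegel_h q"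
proof -
  have e: "snd (p + u *\<^sub>R (q - p)) = (1 - u) *\<^sub>R snd p + u *\<^sub>R snd q" by (simp add: algebra_simps)
  have "norm (snd (p + u *\<^sub>R (q - p))) \<le> (1 - u) * norm (snd p) + u * norm (snd q)"
    unfolding e using assms by (metis (no_types) abs_of_nonneg diff_ge_0_iff_ge norm_scaleR norm_triangle_ineq)
  then have "(norm (snd (p + u *\<^sub>R (q - p))))^2 \<le> ((1 - u) * norm (snd p) + u * norm (snd q))^2"
    by (simp add: power_mono)
  also have "\<dots> \<le> (1 - u) * (norm (snd p))^2 + u * (norm (snd q))^2" by (rule sq_convex[OF assms])
  finally show ?thesis unfolding siegel_h_def by (simp add: algebra_simps)
qed

lemma cont_metric:
  fixes \<gamma> :: "real \<Rightarrow> complex \<times> (complex^'m::finite)"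
  assumes "continuous_on S \<gamma>" "\<And>t. t \<in> S \<Longrightarrow> siegel_h (\<gamma> t) > 0"
  shows "continuous_on S (\<lambda>t. sqrt (siegel_metric (\<gamma> t) V))"
proof -
  have ch: "continuous_on S (\<lambda>t. siegel_h (\<gamma> t))"
    by (rule continuous_on_compose2[OF cont_h assms(1)]) auto
  have cs: "continuous_on S (\<lambda>t. (\<Sum>i\<in>UNIV. cnj (snd (\<gamma> t) $ i) * snd V $ i))"
    by (intro continuous_intros continuous_on_compose2[OF bounded_linear.continuous_on[OF bounded_linear_vec_nth continuous_on_id]]
          continuous_on_snd assms(1)) auto
  show ?thesis unfolding siegel_metric_def
    using assms by (intro continuous_intros ch cs) (auto, fastforce)
qed

lemma adm_exists:
  fixes p q :: "complex \<times> (complex^'m::finite)"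
  assumes p: "siegel_h p > 0" and q: "siegel_h q > 0"
  shows "\<exists>\<gamma>. admissible_curve p q \<gamma>"
proof -
  define \<gamma> where "\<gamma> u = p + u *\<^sub>R (q - p)" for u :: real
  have d: "(\<gamma> has_vector_derivative (q - p)) (at u)" for u
    unfolding \<gamma>_def by (auto intro!: derivative_eq_intros)
  have vd: "vector_derivative \<gamma> (at u) = q - p" for u by (rule vector_derivative_at[OF d])
  have gc: "continuous_on {0..1} \<gamma>" unfolding \<gamma>_def by (intro continuous_intros)
  have hpos: "siegel_h (\<gamma> u) > 0" if "u \<in> {0..1}" for u
  proof -
    have "siegel_h (\<gamma> u) \<ge> (1 - u) * siegel_h p + u * siegel_h q"
      unfolding \<gamma>_def using that by (intro h_concave) auto
    moreover have "(1 - u) * siegel_h p + u * siegel_h q > 0"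
    proof (cases "u = 1")
      case True then show ?thesis using q by simp
    next
      case False then have "(1 - u) * siegel_h p > 0" using that p by simp
      moreover have "u * siegel_h q \<ge> 0" using that q by simp
      ultimately show ?thesis by linarith
    qed
    ultimately show ?thesis by linarith
  qed
  have "admissible_curve p q \<gamma>"
    unfolding admissible_curve_def
  proof (intro conjI)
    show "\<gamma> piecewise_C1_differentiable_on {0..1}"
      by (rule C1_differentiable_imp_piecewise) (auto simp: C1_differentiable_on_def intro!: exI[of _ "\<lambda>_. q - p"] d)
    show "\<gamma> ` {0..1} \<subseteq> siegel_domain" using hpos unfolding siegel_domain_def by auto
    show "\<gamma> 0 = p" "\<gamma> 1 = q" unfolding \<gamma>_def by auto
    show "curve_speed \<gamma> integrable_on {0..1}"
      unfolding curve_speed_def vd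
      by (rule integrable_continuous_interval, rule cont_metric[OF gc hpos])
  qed
  then show ?thesis by blast
qed

lemma dist_lower:
  fixes p q :: "complex \<times> (complex^'m::finite)"
  assumes p: "siegel_h p > 0" and q: "siegel_h q > 0"
    and L: "\<And>\<gamma>. admissible_curve p q \<gamma> \<Longrightarrow> curve_length \<gamma> \<ge> B"
  shows "siegel_dist p q \<ge> B"
  unfolding siegel_dist_def
  by (rule cInf_greatest) (use adm_exists[OF p q] L in auto)

lemma dist_nonneg:
  fixes p q :: "complex \<times> (complex^'m::finite)"
  assumes p: "siegel_h p > 0" and q: "siegel_h q > 0"
  shows "siegel_dist p q \<ge> 0"
  by (rule dist_lower[OF p q length_nonneg])

lemma dist_upper:
  assumes "admissible_curve p q \<gamma>"
  shows "siegel_dist p q \<le> curve_length \<gamma>"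
  unfolding siegel_dist_def
proof (rule cInf_lower)
  show "curve_length \<gamma> \<in> {curve_length \<gamma> |\<gamma>. admissible_curve p q \<gamma>}" using assms by auto
  show "bdd_below {curve_length \<gamma> |\<gamma>. admissible_curve p q \<gamma>}"
    by (rule bdd_belowI[of _ 0]) (auto intro: length_nonneg)
qed

lemma contra:
  fixes X :: "complex^('m::finite idx)^('m idx)"
  assumes X: "X \<in> U_Q" and s: "s > 0"
    and m: "siegel_h m > s" "s * (cmod (ell X m))^2 < siegel_h m"
  shows "interior (horoball s) \<inter> interior (proj_act X ` horoball s) \<noteq> {}"
proof -
  define O1 where "O1 = {m :: complex \<times> (complex^'m). s < siegel_h m}"
  define O2 where "O2 = {m :: complex \<times> (complex^'m). s * (cmod (ell X m))^2 < siegel_h m}"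
  have o1: "open O1" unfolding O1_def
    by (rule open_Collect_less) (auto intro: continuous_intros simp: continuous_on_eq_continuous_at[symmetric] cont_h)
  have o2: "open O2" unfolding O2_def
    by (rule open_Collect_less)
       (auto intro!: continuous_intros simp: continuous_on_eq_continuous_at[symmetric] cont_h cont_ell)
  have s1: "O1 \<subseteq> horoball s" unfolding O1_def horoball_def by auto
  have s2: "O2 \<subseteq> proj_act X ` horoball s"
  proof
    fix x assume x: "x \<in> O2"
    then have hx: "siegel_h x > 0" unfolding O2_def using s
      by (smt (verit) mult_nonneg_nonneg mem_Collect_eq zero_le_power2)
    obtain p' where p': "proj_act X p' = x" "siegel_h p' > 0"
        "siegel_h x = siegel_h p' * (cmod (ell X x))^2"
      using lemB[OF X hx] by blast
    have "s * (cmod (ell X x))^2 < siegel_h p' * (cmod (ell X x))^2"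
      using x p'(3) unfolding O2_def by simp
    then have "s \<le> siegel_h p'"
      by (smt (verit) mult_right_mono zero_le_power2)
    then show "x \<in> proj_act X ` horoball s" using p' unfolding horoball_def by auto
  qed
  have "m \<in> interior (horoball s)" using interior_maximal[OF s1 o1] m unfolding O1_def by auto
  moreover have "m \<in> interior (proj_act X ` horoball s)" using interior_maximal[OF s2 o2] m unfolding O2_def by auto
  ultimately show ?thesis by auto
qed



lemma vert:
  fixes X :: "complex^('m::finite idx)^('m idx)"
  assumes X: "X \<in> U_Q" and c: "X$last_idx$first_idx \<noteq> 0"
  defines "z0 \<equiv> X$first_idx$first_idx / X$last_idx$first_idx"
    and "zeta \<equiv> (\<chi> i. X$mid_idx i$first_idx / X$last_idx$first_idx) :: complex^'m"
  shows "siegel_h (z0 + of_real t, zeta) = 2 * t"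
    and "ell X (z0 + of_real t, zeta) = of_real t * cnj (X$last_idx$first_idx)"
proof -
  define C where "C = X$last_idx$first_idx"
  define C0 where "C0 = X$first_idx$first_idx"
  define Ci where "Ci i = X$mid_idx i$first_idx" for i
  have cq: "2 * Re (C0 * cnj C) = (\<Sum>i\<in>UNIV. (cmod (Ci i))^2)"
    using colq[OF X] unfolding C_def C0_def Ci_def .
  have C0': "C \<noteq> 0" using c C_def by simp
  have "norm zeta ^ 2 = (\<Sum>i\<in>UNIV. (cmod (Ci i))^2) / (cmod C)^2"
    unfolding norm_sq_vec zeta_def C_def Ci_def by (simp add: norm_divide power_divide sum_divide_distrib)
  moreover have "Re z0 = Re (C0 * cnj C) / (cmod C)^2"
    unfolding z0_def C0_def[symmetric] C_def[symmetric] Re_divide' by simp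
  ultimately show "siegel_h (z0 + of_real t, zeta) = 2 * t"
    unfolding siegel_h_def using cq by (simp add: field_simps)
  have A: "C0 * cnj C + C * cnj C0 = (\<Sum>i\<in>UNIV. Ci i * cnj (Ci i))"
  proof -
    have "(\<Sum>i\<in>UNIV. Ci i * cnj (Ci i)) = complex_of_real (\<Sum>i\<in>UNIV. (cmod (Ci i))^2)"
      unfolding of_real_sum complex_norm_square ..
    also have "\<dots> = complex_of_real (2 * Re (C0 * cnj C))" using cq by simp
    also have "\<dots> = C0 * cnj C + C * cnj C0" by (simp add: complex_eq_iff)
    finally show ?thesis ..
  qed
  have "ell X (z0 + of_real t, zeta) = (C0 / C + of_real t) * cnj C + cnj C0 - (\<Sum>i\<in>UNIV. Ci i / C * cnj (Ci i))"
    unfolding ell_def z0_def zeta_def C_def C0_def Ci_def by simp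
  also have "\<dots> = of_real t * cnj C + (C0 * cnj C + C * cnj C0 - (\<Sum>i\<in>UNIV. Ci i * cnj (Ci i))) / C"
  proof -
    have "(\<Sum>i\<in>UNIV. Ci i / C * cnj (Ci i)) = (\<Sum>i\<in>UNIV. Ci i * cnj (Ci i)) / C"
      unfolding sum_divide_distrib by (simp add: field_simps)
    then show ?thesis using C0' by (simp add: field_simps)
  qed
  also have "\<dots> = of_real t * cnj C" unfolding A by simp
  finally show "ell X (z0 + of_real t, zeta) = of_real t * cnj (X$last_idx$first_idx)" unfolding C_def .
qed

lemma upper:
  fixes X :: "complex^('m::finite idx)^('m idx)"
  assumes X: "X \<in> U_Q" and s: "s > 0" and cs: "cmod (X$last_idx$first_idx) * s \<ge> 2"
  shows "\<exists>p q. p \<in> horoball s \<and> q \<in> proj_act X ` horoball s \<and>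
      siegel_dist' p q \<le> ln (cmod (X$last_idx$first_idx)) + ln (s / 2)"
proof -
  define c where "c = X$last_idx$first_idx"
  have c0: "c \<noteq> 0" using cs s c_def by auto
  have cpos: "cmod c > 0" using c0 by simp
  define z0 where "z0 = X$first_idx$first_idx / X$last_idx$first_idx"
  define zeta :: "complex^'m" where "zeta = (\<chi> i. X$mid_idx i$first_idx / X$last_idx$first_idx)"
  have vh: "\<And>t. siegel_h (z0 + of_real t, zeta) = 2 * t"
    using vert(1)[OF X] c0 c_def z0_def zeta_def by auto
  have vl: "\<And>t. ell X (z0 + of_real t, zeta) = of_real t * cnj c"
    using vert(2)[OF X] c0 c_def z0_def zeta_def by auto
  define t1 where "t1 = s / 2"
  define t2 where "t2 = 2 / ((cmod c)^2 * s)"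
  have t1p: "t1 > 0" and t2p: "t2 > 0" using s cpos by (auto simp: t1_def t2_def)
  define L where "L = ln (t2 / t1)"
  have t21: "t2 \<le> t1"
  proof -
    have cs': "2 \<le> cmod c * s" using cs unfolding c_def .
    have "2 * 2 \<le> (cmod c * s) * (cmod c * s)" using cs' by (intro mult_mono) auto
    then show ?thesis unfolding t1_def t2_def using s cpos by (simp add: field_simps power2_eq_square)
  qed
  have L0: "L \<le> 0" unfolding L_def using t21 t1p t2p by simp
  have absL: "\<bar>L\<bar> = 2 * (ln (cmod c) + ln (s / 2))"
  proof -
    have "t1 / t2 = (cmod c)^2 * (s / 2)^2" unfolding t1_def t2_def using s cpos
      by (simp add: field_simps power2_eq_square)
    then have "ln (t1 / t2) = 2 * ln (cmod c) + 2 * ln (s / 2)"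
      using s cpos by (simp add: ln_mult ln_realpow)
    moreover have "ln (t1 / t2) = - L" unfolding L_def using t1p t2p by (simp add: ln_div)
    ultimately show ?thesis using L0 by simp
  qed
  define \<gamma> where "\<gamma> u = (z0 + of_real (t1 * exp (u * L)), zeta)" for u :: real
  define V where "V u = (complex_of_real (t1 * (exp (u * L) * L)), 0 :: complex^'m)" for u :: real
  have d: "(\<gamma> has_vector_derivative V u) (at u)" for u
    unfolding \<gamma>_def V_def
    by (auto intro!: derivative_eq_intros has_vector_derivative_Pair simp: has_real_derivative_iff_has_vector_derivative[symmetric])
  have vd: "vector_derivative \<gamma> (at u) = V u" for u by (rule vector_derivative_at[OF d])
  have hg: "siegel_h (\<gamma> u) = 2 * (t1 * exp (u * L))" for u unfolding \<gamma>_def vh ..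
  have sp: "curve_speed \<gamma> u = \<bar>L\<bar>" for u
  proof -
    have T: "t1 * exp (u * L) > 0" using t1p by simp
    have "siegel_metric (\<gamma> u) (V u) = L^2"
      unfolding siegel_metric_def hg using T t1p by (simp add: V_def norm_mult power_mult_distrib field_simps power2_eq_square)
    then show ?thesis unfolding curve_speed_def vd by simp
  qed
  have adm: "admissible_curve (\<gamma> 0) (\<gamma> 1) \<gamma>"
    unfolding admissible_curve_def
  proof (intro conjI)
    show "\<gamma> piecewise_C1_differentiable_on {0..1}"
    proof (rule C1_differentiable_imp_piecewise, unfold C1_differentiable_on_def, intro exI conjI ballI)
      show "(\<gamma> has_vector_derivative V x) (at x)" for x by (rule d)
      show "continuous_on {0..1} V" unfolding V_def by (intro continuous_intros)
    qed
    show "\<gamma> ` {0..1} \<subseteq> siegel_domain" unfolding siegel_domain_def using hg t1p by auto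
    show "curve_speed \<gamma> integrable_on {0..1}" unfolding sp by (rule integrable_const_ivl)
  qed auto
  have len: "curve_length \<gamma> = \<bar>L\<bar>" unfolding curve_length_def sp by simp
  have p: "\<gamma> 0 \<in> horoball s" using hg[of 0] unfolding horoball_def t1_def by simp
  have q: "\<gamma> 1 \<in> proj_act X ` horoball s"
  proof -
    have e1: "exp L = t2 / t1" unfolding L_def using t1p t2p by simp
    have g1: "\<gamma> 1 = (z0 + of_real t2, zeta)" unfolding \<gamma>_def using t1p by (simp add: e1)
    have h1: "siegel_h (\<gamma> 1) = 2 * t2" unfolding g1 vh ..
    obtain p' where p': "proj_act X p' = \<gamma> 1" "siegel_h p' > 0"
        "siegel_h (\<gamma> 1) = siegel_h p' * (cmod (ell X (\<gamma> 1)))^2"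
      using lemB[OF X, of "\<gamma> 1"] h1 t2p by auto
    have "cmod (ell X (\<gamma> 1)) = t2 * cmod c" unfolding g1 vl using t2p by (simp add: norm_mult)
    then have "2 * t2 = siegel_h p' * (t2 * cmod c)^2" using p'(3) h1 by simp
    then have "siegel_h p' = 2 / (t2 * (cmod c)^2)" using t2p cpos
      by (simp add: field_simps power2_eq_square)
    also have "\<dots> = s" unfolding t2_def using s cpos by (simp add: field_simps)
    finally show ?thesis using p'(1) unfolding horoball_def by force
  qed
  have "siegel_dist' (\<gamma> 0) (\<gamma> 1) \<le> \<bar>L\<bar> / 2"
    unfolding siegel_dist'_def using dist_upper[OF adm] len by simp
  then show ?thesis using p q absL c_def by (intro exI[of _ "\<gamma> 0"] exI[of _ "\<gamma> 1"]) auto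
qed



theorem lemma6p3:
  fixes X :: "complex^('m::finite idx)^('m idx)" and s :: real
  assumes "X \<in> U_Q" and "s > 0"
    and "interior (horoball s) \<inter> interior (proj_act X ` horoball s) = {}"
  shows "siegel_setdist' (horoball s) (proj_act X ` horoball s)
           = ln (cmod (X $ last_idx $ first_idx)) + ln (s / 2)"
proof -
  note X = assms(1) and s = assms(2) and disj = assms(3)
  define c where "c = X$last_idx$first_idx"
  have cs: "cmod c * s \<ge> 2"
  proof (rule ccontr)
    assume ncs: "\<not> cmod c * s \<ge> 2"
    show False
    proof (cases "c = 0")
      case True
      define t where "t = s * (cmod (X$first_idx$first_idx))^2 + s + 1"
      define m where "m = (complex_of_real t, 0 :: complex^'m)"
      have hm: "siegel_h m = 2 * t" unfolding m_def siegel_h_def by simp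
      have lm: "ell X m = cnj (X$first_idx$first_idx)"
        unfolding m_def ell_def using True c_def by simp
      have "interior (horoball s) \<inter> interior (proj_act X ` horoball s) \<noteq> {}"
      proof (rule contra[OF X s, of m])
        have "0 \<le> s * (cmod (X$first_idx$first_idx))^2" using s by simp
        moreover have aux: "\<And>a::real. 0 \<le> a \<Longrightarrow> s < 2 * (a + s + 1) \<and> a < 2 * (a + s + 1)"
          using s by auto
        ultimately show "s < siegel_h m" "s * (cmod (ell X m))^2 < siegel_h m"
          unfolding hm lm complex_mod_cnj t_def by blast+
      qed
      with disj show False by simp
    next
      case False
      have cpos: "cmod c > 0" using False by simp
      define z0 where "z0 = X$first_idx$first_idx / X$last_idx$first_idx"
      define zeta :: "complex^'m" where "zeta = (\<chi> i. X$mid_idx i$first_idx / X$last_idx$first_idx)"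
      define m where "m = (z0 + complex_of_real (1 / cmod c), zeta)"
      have hm: "siegel_h m = 2 / cmod c" unfolding m_def z0_def zeta_def
        using vert(1)[OF X, of "1 / cmod c"] False c_def by simp
      have lm: "cmod (ell X m) = 1" unfolding m_def z0_def zeta_def
        using vert(2)[OF X, of "1 / cmod c"] False c_def by (simp add: norm_mult norm_divide)
      have "s < 2 / cmod c" using ncs cpos by (simp add: field_simps)
      then have "interior (horoball s) \<inter> interior (proj_act X ` horoball s) \<noteq> {}"
        by (intro contra[OF X s, of m]) (simp_all add: hm lm)
      with disj show False by simp
    qed
  qed
  have cpos: "cmod c > 0" using cs s by (auto intro: ccontr)
  define T where "T = ln (cmod c) + ln (s / 2)"
  define S where "S = {siegel_dist' p q | p q. p \<in> horoball s \<and> q \<in> proj_act X ` horoball s}"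
  have low: "siegel_dist' p q \<ge> T" if p: "p \<in> horoball s" and q: "q \<in> proj_act X ` horoball s" for p q
  proof -
    obtain p' where p': "p' \<in> horoball s" "q = proj_act X p'" using q by auto
    have hp: "siegel_h p \<ge> s" and hp': "siegel_h p' \<ge> s" using p p'(1) unfolding horoball_def by auto
    have hp0: "siegel_h p > 0" and hp'0: "siegel_h p' > 0" using hp hp' s by auto
    have A: "siegel_h q = siegel_h p' * (cmod (ell X q))^2" "siegel_h q > 0"
      using lemA[OF X hp'0] p'(2) by auto
    have hq: "siegel_h q \<ge> s * (cmod (ell X q))^2" unfolding A(1) using hp' by (simp add: mult_right_mono)
    show ?thesis
    proof (cases "cmod c * s > 2")
      case True
      have "siegel_dist p q \<ge> 2 * T"
        by (rule dist_lower[OF hp0 A(2)]) (use lower_curve[OF X s True[unfolded c_def] _ hp hq] T_def c_def in auto)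
      then show ?thesis unfolding siegel_dist'_def by simp
    next
      case False
      then have "cmod c * s = 2" using cs by simp
      then have e: "cmod c * (s / 2) = 1" by simp
      have "T = ln (cmod c * (s / 2))" unfolding T_def using cpos s ln_mult[of "cmod c" "s / 2"] by simp
      then have "T = 0" unfolding e by simp
      then show ?thesis unfolding siegel_dist'_def using dist_nonneg[OF hp0 A(2)] by simp
    qed
  qed
  have ne: "S \<noteq> {}"
  proof -
    define p0 where "p0 = (complex_of_real s, 0 :: complex^'m)"
    have "p0 \<in> horoball s" unfolding p0_def horoball_def siegel_h_def using s by simp
    then show ?thesis unfolding S_def by blast
  qed
  have lowS: "\<And>x. x \<in> S \<Longrightarrow> T \<le> x" unfolding S_def using low by blast
  have ge: "Inf S \<ge> T" by (rule cInf_greatest[OF ne lowS])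
  obtain p q where pq: "p \<in> horoball s" "q \<in> proj_act X ` horoball s" "siegel_dist' p q \<le> T"
    using upper[OF X s] cs unfolding T_def c_def by blast
  have "Inf S \<le> siegel_dist' p q"
  proof (rule cInf_lower)
    show "siegel_dist' p q \<in> S" unfolding S_def using pq by blast
    show "bdd_below S" by (rule bdd_belowI[of _ T]) (rule lowS)
  qed
  with pq ge have "Inf S = T" by simp
  then show ?thesis unfolding siegel_setdist'_def S_def[symmetric] T_def c_def .
qed



end
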